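(* Let $N\ge 0$ be an integer, let $q$ be a nonzero complex number with $q^j\neq 1$ for $1\le j\le N$, and let $a,b,c$ be complex numbers with $b,c\neq 0$, $b/c\notin\{q^{1-N},\dots,q^{N-1}\}$ and $bc\notin\{1,q^{-1},\dots,q^{1-N}\}$. Then, as polynomials in $x$, $$h_N(x;a)=\sum_{k=0}^N C_k^N(a,b,c)\,h_k(x;b)\,h_{N-k}(x;c),$$ where $$C_k^N(a,b,c)=q^{k(k-N)}\binom{N}{k}_q\frac{(a/c;q)_k\,(q^{N-k}ac;q)_k\,(a/b;q)_{N-k}\,(q^kab;q)_{N-k}}{(q^{k-N}b/c;q)_k\,(q^{-k}c/b;q)_{N-k}\,(bc;q)_N}.$$ Equivalently, with $x=\xi+\xi^{-1}$, $${}_8W_7(q^{-N}b/c;\,q^{-N},q^{1-N}/(ac),a/c,b\xi,b\xi^{-1};q,q)=\frac{(cb,c/b,a\xi,a\xi^{-1};q)_N}{(ab,a/b,c\xi,c\xi^{-1};q)_N}.$$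
   Context: $(a;q)_k=\prod_{j=0}^{k-1}(1-aq^j)$, $(a_1,\dots,a_n;q)_k=\prod_i(a_i;q)_k$, $\binom{N}{k}_q=\frac{(q;q)_N}{(q;q)_k(q;q)_{N-k}}$. $h_k(x;a)=\prod_{j=0}^{k-1}(1-axq^j+a^2q^{2j})=(a\xi,a\xi^{-1};q)_k$ where $\xi+\xi^{-1}=x$. Very-well-poised series: ${}_{r+1}W_r(a;b_1,\dots,b_{r-2};q,z)=\sum_{k\ge0}\frac{1-aq^{2k}}{1-a}\frac{(a,b_1,\dots,b_{r-2};q)_k}{(q,aq/b_1,\dots,aq/b_{r-2};q)_k}z^k$, which terminates when some $b_i=q^{-n}$, $n\in\mathbb Z_{\ge0}$. *)

theory Defs
  imports Complex_Main
begin

definition qpoch :: "complex \<Rightarrow> complex \<Rightarrow> nat \<Rightarrow> complex" where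
  "qpoch a q k = (\<Prod>j<k. 1 - a * q ^ j)"

definition qbinom :: "complex \<Rightarrow> nat \<Rightarrow> nat \<Rightarrow> complex" where
  "qbinom q N k = qpoch q q N / (qpoch q q k * qpoch q q (N - k))"

definition hpoly :: "complex \<Rightarrow> nat \<Rightarrow> complex \<Rightarrow> complex \<Rightarrow> complex" where
  "hpoly q k x a = (\<Prod>j<k. 1 - a * x * q ^ j + a ^ 2 * q ^ (2 * j))"

definition connC :: "complex \<Rightarrow> nat \<Rightarrow> nat \<Rightarrow> complex \<Rightarrow> complex \<Rightarrow> complex \<Rightarrow> complex" where
  "connC q N k a b c =
     q powi (int k * (int k - int N)) * qbinom q N k *
     (qpoch (a / c) q k * qpoch (q ^ (N - k) * a * c) q k *
      qpoch (a / b) q (N - k) * qpoch (q ^ k * a * b) q (N - k)) /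
     (qpoch (q powi (int k - int N) * b / c) q k *
      qpoch (q powi (- int k) * c / b) q (N - k) *
      qpoch (b * c) q N)"

end

theory Submission
  imports Defs
begin

lemma qpoch_Suc: "qpoch x q (Suc n) = qpoch x q n * (1 - x * q ^ n)"
  by (simp add: qpoch_def)

lemma qpoch_Suc2: "y = x * q \<Longrightarrow> qpoch x q (Suc n) = (1 - x) * qpoch y q n"
  unfolding qpoch_def prod.lessThan_Suc_shift by (simp add: mult.assoc)

lemma qpoch_nz: "(\<And>j. j < n \<Longrightarrow> x * q ^ j \<noteq> 1) \<Longrightarrow> qpoch x q n \<noteq> 0"
  unfolding qpoch_def by (auto simp: prod_zero_iff)

lemma hpoly_Suc: "hpoly q (Suc n) x a = hpoly q n x a * (1 - (a*q^n) * x + (a*q^n)^2)"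
  by (simp add: hpoly_def power_mult_distrib power_mult mult.commute mult.left_commute)

definition al :: "complex \<Rightarrow> complex \<Rightarrow> complex \<Rightarrow> complex" where
  "al d u v = (d - v) * (1 - d * v) / ((u - v) * (1 - u * v))"

lemma lin_split:
  assumes "u \<noteq> v" "u * v \<noteq> 1"
  shows "1 - d * x + d^2 = al d u v * (1 - u * x + u^2) + al d v u * (1 - v * x + v^2)"
proof -
  define D where "D = (u - v) * (1 - u * v)"
  have D: "D \<noteq> 0" using assms by (simp add: D_def)
  have e1: "al d u v = (d - v) * (1 - d * v) / D" by (simp add: al_def D_def)
  have e2': "(v - u) * (1 - v * u) = - D" by (simp add: D_def algebra_simps)
  have e2: "al d v u = - ((d - u) * (1 - d * u)) / D" unfolding al_def e2' by simp
  have "D * (1 - d * x + d^2) = D * (al d u v * (1 - u * x + u^2) + al d v u * (1 - v * x + v^2))"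
  proof -
    have "D * (al d u v * (1 - u * x + u^2) + al d v u * (1 - v * x + v^2)) =
       (d - v) * (1 - d * v) * (1 - u * x + u^2) - (d - u) * (1 - d * u) * (1 - v * x + v^2)"
      unfolding e1 e2 using D by (simp add: field_simps)
    also have "\<dots> = D * (1 - d * x + d^2)" unfolding D_def by algebra
    finally show ?thesis by (rule sym)
  qed
  then show ?thesis using D by (metis mult_left_cancel)
qed

lemma expand_step:
  fixes C :: "nat \<Rightarrow> complex"
  assumes IH: "hpoly q n x a = (\<Sum>k\<le>n. C k * hpoly q k x b * hpoly q (n-k) x c)"
   and nd: "\<And>k. k \<le> n \<Longrightarrow> b*q^k \<noteq> c*q^(n-k) \<and> b*q^k*(c*q^(n-k)) \<noteq> 1"
  shows "hpoly q (Suc n) x a = (\<Sum>k\<le>Suc n. ((if k = 0 then 0 else al (a*q^n) (b*q^(k-1)) (c*q^(n-(k-1))) * C (k-1))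
      + (if k = Suc n then 0 else al (a*q^n) (c*q^(n-k)) (b*q^k) * C k)) * hpoly q k x b * hpoly q (Suc n - k) x c)"
proof -
  define d where "d = a*q^n"
  have tm: "C k * hpoly q k x b * hpoly q (n-k) x c * (1 - d * x + d^2) =
     al d (b*q^k) (c*q^(n-k)) * C k * hpoly q (Suc k) x b * hpoly q (n-k) x c
     + al d (c*q^(n-k)) (b*q^k) * C k * hpoly q k x b * hpoly q (Suc n - k) x c" if "k \<le> n" for k
  proof -
    have sp: "1 - d * x + d^2 = al d (b*q^k) (c*q^(n-k)) * (1 - (b*q^k) * x + (b*q^k)^2)
         + al d (c*q^(n-k)) (b*q^k) * (1 - (c*q^(n-k)) * x + (c*q^(n-k))^2)"
      using nd[OF that] by (intro lin_split) auto
    have s2: "Suc n - k = Suc (n - k)" using that by simp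
    show ?thesis unfolding sp s2 hpoly_Suc by (simp add: algebra_simps)
  qed
  have "hpoly q (Suc n) x a = (\<Sum>k\<le>n. C k * hpoly q k x b * hpoly q (n-k) x c) * (1 - d * x + d^2)"
    by (simp add: hpoly_Suc IH d_def)
  also have "\<dots> = (\<Sum>k\<le>n. C k * hpoly q k x b * hpoly q (n-k) x c * (1 - d * x + d^2))"
    by (simp add: sum_distrib_right)
  also have "\<dots> = (\<Sum>k\<le>n. al d (b*q^k) (c*q^(n-k)) * C k * hpoly q (Suc k) x b * hpoly q (n-k) x c)
     + (\<Sum>k\<le>n. al d (c*q^(n-k)) (b*q^k) * C k * hpoly q k x b * hpoly q (Suc n - k) x c)"
    by (simp add: tm sum.distrib)
  also have "\<dots> = (\<Sum>k\<le>Suc n. (if k = 0 then 0 else al d (b*q^(k-1)) (c*q^(n-(k-1))) * C (k-1)) * hpoly q k x b * hpoly q (Suc n - k) x c)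
     + (\<Sum>k\<le>Suc n. (if k = Suc n then 0 else al d (c*q^(n-k)) (b*q^k) * C k) * hpoly q k x b * hpoly q (Suc n - k) x c)"
  proof -
    have "(\<Sum>k\<le>Suc n. (if k = 0 then 0 else al d (b*q^(k-1)) (c*q^(n-(k-1))) * C (k-1)) * hpoly q k x b * hpoly q (Suc n - k) x c)
      = (\<Sum>k\<le>n. al d (b*q^k) (c*q^(n-k)) * C k * hpoly q (Suc k) x b * hpoly q (n-k) x c)"
      by (subst sum.atMost_Suc_shift) simp
    moreover have "(\<Sum>k\<le>Suc n. (if k = Suc n then 0 else al d (c*q^(n-k)) (b*q^k) * C k) * hpoly q k x b * hpoly q (Suc n - k) x c)
      = (\<Sum>k\<le>n. al d (c*q^(n-k)) (b*q^k) * C k * hpoly q k x b * hpoly q (Suc n - k) x c)"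
      by (subst sum.atMost_Suc) simp
    ultimately show ?thesis by simp
  qed
    finally show ?thesis unfolding d_def[symmetric] by (simp add: sum.distrib[symmetric] algebra_simps)
qed

lemma core:
  fixes a b c q t s :: complex
  assumes n1: "1 - q*t \<noteq> 0" and n2: "1 - q*s \<noteq> 0" and n3: "c*q*s - b \<noteq> 0"
    and n4: "b*q*t - c \<noteq> 0" and n5: "b*t - c*s \<noteq> 0" and n6: "1 - b*c*q*t*s \<noteq> 0"
    and n7: "c*q*s - b*t \<noteq> 0" and n8: "b*q*t - c*s \<noteq> 0"
  shows "q*(1-q*q*t*s)*(c-a*t)*(b-a*s)*(1-q*a*c*t*s)*(1-q*a*b*t*s) / ((1-q*t)*(1-q*s)*(c*q*s-b)*(b*q*t-c)*(1-b*c*q*t*s))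
    = al (a*q*t*s) (b*t) (c*q*s) * ((b-a*s)*(1-a*b*t)*(c*q*s-b*t)/((1-q*s)*(c*q*s-b)*(b*t-c*s)))
    + al (a*q*t*s) (c*s) (b*q*t) * ((c-a*t)*(1-a*c*s)*(b*q*t-c*s)/((1-q*t)*(b*q*t-c)*(c*s-b*t)))"
proof -
  have m1: "b*t - c*q*s \<noteq> 0" using n7 by (metis eq_iff_diff_eq_0)
  have m2: "c*s - b*q*t \<noteq> 0" using n8 by (metis eq_iff_diff_eq_0)
  have m3: "c*s - b*t \<noteq> 0" using n5 by (metis eq_iff_diff_eq_0)
  have m4: "1 - b*t*(c*q*s) \<noteq> 0" using n6 by (metis mult.commute mult.left_commute)
  have m5: "1 - c*s*(b*q*t) \<noteq> 0" using n6 by (metis mult.commute mult.left_commute)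
  note nz = n1 n2 n3 n4 n5 n6 m1 m2 m3 m4 m5
  show ?thesis unfolding al_def times_divide_times_eq
    apply (subst add_frac_eq)
      apply (intro no_zero_divisors nz)
     apply (intro no_zero_divisors nz)
    apply (subst frac_eq_eq)
      apply (intro no_zero_divisors nz)
     apply (intro no_zero_divisors nz)
    apply algebra
    done
qed

definition CC :: "complex \<Rightarrow> nat \<Rightarrow> nat \<Rightarrow> complex \<Rightarrow> complex \<Rightarrow> complex \<Rightarrow> complex" where
  "CC q k l a b c = qpoch q q (k+l) / (qpoch q q k * qpoch q q l) *
     (qpoch (a/c) q k * qpoch (q^l*a*c) q k * qpoch (a/b) q l * qpoch (q^k*a*b) q l) /
     (q^(k*l) * qpoch (b/(c*q^l)) q k * qpoch (c/(b*q^k)) q l * qpoch (b*c) q (k+l))"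

lemma connC_CC:
  assumes "q \<noteq> 0"
  shows "connC q (k+l) k a b c = CC q k l a b c"
proof -
  have e1: "q powi (int k * (int k - int (k+l))) = inverse (q^(k*l))"
  proof -
    have "int k * (int k - int (k+l)) = - int (k*l)" by simp
    then show ?thesis by (simp add: power_int_minus del: of_nat_mult)
  qed
  have e2: "q powi (int k - int (k + l)) * b / c = b/(c*q^l)"
  proof -
    have "int k - int (k+l) = - int l" by simp
    then show ?thesis by (simp add: power_int_minus field_simps)
  qed
  have e3: "q powi (- int k) * c / b = c/(b*q^k)"
    by (simp add: power_int_minus field_simps)
  have e4: "k + l - k = l" by simp
  show ?thesis unfolding connC_def qbinom_def CC_def e1 e2 e3 e4
    by (simp add: divide_inverse ac_simps)
qed

lemma interior:
  fixes q a b c :: complex and i m :: nat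
  assumes hq: "q \<noteq> 0" and hb: "b \<noteq> 0" and hc: "c \<noteq> 0"
    and hQ: "\<And>j. 1 \<le> j \<Longrightarrow> j \<le> Suc (Suc (i+m)) \<Longrightarrow> q^j \<noteq> 1"
    and hB: "\<And>A B. A < Suc (Suc (i+m)) \<Longrightarrow> B < Suc (Suc (i+m)) \<Longrightarrow> b*q^B \<noteq> c*q^A"
    and hC: "\<And>j. j < Suc (Suc (i+m)) \<Longrightarrow> b*c*q^j \<noteq> 1"
  shows "CC q (Suc i) (Suc m) a b c = al (a*q^(Suc(i+m))) (b*q^i) (c*q^(Suc m)) * CC q i (Suc m) a b c
     + al (a*q^(Suc(i+m))) (c*q^m) (b*q^(Suc i)) * CC q (Suc i) m a b c"
proof -
  define t where "t = q^i"
  define s where "s = q^m"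
  define E where "E = q^(i*m)"
  define PQ where "PQ = qpoch q q (Suc (i+m))"
  define Pi where "Pi = qpoch q q i"
  define Pm where "Pm = qpoch q q m"
  define A1 where "A1 = qpoch (a/c) q i"
  define A2 where "A2 = qpoch (q^Suc m*a*c) q i"
  define A3 where "A3 = qpoch (a/b) q m"
  define A4 where "A4 = qpoch (q^Suc i*a*b) q m"
  define D1 where "D1 = qpoch (b/(c*s)) q i"
  define D2 where "D2 = qpoch (c/(b*t)) q m"
  define B where "B = qpoch (b*c) q (Suc (i+m))"
  have t0: "t \<noteq> 0" and s0: "s \<noteq> 0" and E0: "E \<noteq> 0" using hq by (simp_all add: t_def s_def E_def)
  have n1: "1 - q*t \<noteq> 0" using hQ[of "Suc i"] by (simp add: t_def)
  have n2: "1 - q*s \<noteq> 0" using hQ[of "Suc m"] by (simp add: s_def)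
  have n3: "c*q*s - b \<noteq> 0" using hB[of "Suc m" 0] by (auto simp: s_def algebra_simps)
  have n4: "b*q*t - c \<noteq> 0" using hB[of 0 "Suc i"] by (auto simp: t_def algebra_simps)
  have n5: "b*t - c*s \<noteq> 0" using hB[of m i] by (auto simp: t_def s_def algebra_simps)
  have n6: "1 - b*c*q*t*s \<noteq> 0" using hC[of "Suc (i+m)"] by (auto simp: t_def s_def power_add algebra_simps)
  have n7: "c*q*s - b*t \<noteq> 0" using hB[of "Suc m" i] by (auto simp: t_def s_def algebra_simps)
  have n8: "b*q*t - c*s \<noteq> 0" using hB[of m "Suc i"] by (auto simp: t_def s_def algebra_simps)
  have Pi0: "Pi \<noteq> 0" unfolding Pi_def
    by (rule qpoch_nz) (use hQ in \<open>auto simp flip: power_Suc\<close>)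
  have Pm0: "Pm \<noteq> 0" unfolding Pm_def
    by (rule qpoch_nz) (use hQ in \<open>auto simp flip: power_Suc\<close>)
  have D10: "D1 \<noteq> 0" unfolding D1_def
  proof (rule qpoch_nz)
    fix j assume "j < i"
    then have "b*q^j \<noteq> c*s" using hB[of m j] by (simp add: s_def)
    then show "b/(c*s)*q^j \<noteq> 1" using hc s0 by (simp add: field_simps)
  qed
  have D20: "D2 \<noteq> 0" unfolding D2_def
  proof (rule qpoch_nz)
    fix j assume "j < m"
    then have "c*q^j \<noteq> b*t" using hB[of j i] by (auto simp: t_def)
    then show "c/(b*t)*q^j \<noteq> 1" using hb t0 by (simp add: field_simps)
  qed
  have B0: "B \<noteq> 0" unfolding B_def
    by (rule qpoch_nz) (use hC in auto)
  have qs: "q^Suc m = q*s" and qt: "q^Suc i = q*t" by (simp_all add: s_def t_def)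
  have qts: "q^Suc (i+m) = q*t*s" by (simp add: s_def t_def power_add)
  have f01: "qpoch q q (Suc i + Suc m) = PQ*(1-q*q*t*s)"
    by (simp add: PQ_def qpoch_Suc[of q q "Suc (i+m)"] qts mult.assoc t_def s_def power_add)
  have f02: "qpoch q q (Suc i) = Pi*(1-q*t)" by (simp add: Pi_def qpoch_Suc t_def)
  have f03: "qpoch q q (Suc m) = Pm*(1-q*s)" by (simp add: Pm_def qpoch_Suc s_def)
  have f04: "qpoch (a/c) q (Suc i) = A1*(c-a*t)/c" using hc by (simp add: A1_def qpoch_Suc t_def field_simps)
  have f05: "qpoch (q^Suc m*a*c) q (Suc i) = A2*(1-q*a*c*t*s)" unfolding A2_def qpoch_Suc by (simp add: t_def s_def ac_simps)
  have f06: "qpoch (a/b) q (Suc m) = A3*(b-a*s)/b" using hb by (simp add: A3_def qpoch_Suc s_def field_simps)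
  have f07: "qpoch (q^Suc i*a*b) q (Suc m) = A4*(1-q*a*b*t*s)" unfolding A4_def qpoch_Suc by (simp add: t_def s_def ac_simps)
  have f08: "q^(Suc i * Suc m) = E*t*s*q" by (simp add: E_def t_def s_def power_add ac_simps flip: power_mult)
  have f09: "qpoch (b/(c*q^Suc m)) q (Suc i) = (c*q*s-b)/(c*q*s)*D1"
  proof -
    have "qpoch (b/(c*q^Suc m)) q (Suc i) = (1 - b/(c*q^Suc m)) * D1"
      unfolding D1_def by (rule qpoch_Suc2) (use hq in \<open>simp add: s_def\<close>)
    then show ?thesis using hc hq s0 by (simp add: s_def field_simps)
  qed
  have f10: "qpoch (c/(b*q^Suc i)) q (Suc m) = (b*q*t-c)/(b*q*t)*D2"
  proof -
    have "qpoch (c/(b*q^Suc i)) q (Suc m) = (1 - c/(b*q^Suc i)) * D2"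
      unfolding D2_def by (rule qpoch_Suc2) (use hq in \<open>simp add: t_def\<close>)
    then show ?thesis using hb hq t0 by (simp add: t_def field_simps)
  qed
  have f11: "qpoch (b*c) q (Suc i + Suc m) = B*(1-b*c*q*t*s)"
  proof -
    have "Suc i + Suc m = Suc (Suc (i+m))" by simp
    then show ?thesis unfolding B_def by (simp only: qpoch_Suc[of "b*c" q "Suc (i+m)"]) (simp add: t_def s_def power_add ac_simps)
  qed
  have f12: "qpoch q q (i + Suc m) = PQ" by (simp add: PQ_def)
  have f13: "qpoch (q^i*a*b) q (Suc m) = (1-a*b*t)*A4"
    unfolding A4_def by (rule trans[OF qpoch_Suc2]) (auto simp: t_def ac_simps)
  have f14: "q^(i*Suc m) = E*t" by (simp add: E_def t_def power_add ac_simps)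
  have f15: "qpoch (b/(c*q^Suc m)) q i = (c*q*s-b)*D1/(c*q*s-b*t)"
  proof -
    have "qpoch (b/(c*q^Suc m)) q i * (1 - b/(c*q^Suc m)*q^i) = (c*q*s-b)/(c*q*s)*D1"
      using f09 by (simp add: qpoch_Suc)
    then have "qpoch (b/(c*q^Suc m)) q i * (c*q*s-b*t) = (c*q*s-b)*D1"
      using hc hq s0 by (simp add: s_def t_def field_simps)
    then show ?thesis using n7 by (simp add: field_simps)
  qed
  have f16: "qpoch (c/(b*q^i)) q (Suc m) = D2*(b*t-c*s)/(b*t)"
    using hb t0 by (simp add: D2_def qpoch_Suc t_def s_def field_simps)
  have f17: "qpoch (b*c) q (i + Suc m) = B" by (simp add: B_def)
  have f18: "qpoch q q (Suc i + m) = PQ" by (simp add: PQ_def)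
  have f19: "qpoch (q^m*a*c) q (Suc i) = (1-a*c*s)*A2"
    unfolding A2_def by (rule trans[OF qpoch_Suc2]) (auto simp: s_def ac_simps)
  have f20: "q^(Suc i*m) = E*s" by (simp add: E_def s_def power_add ac_simps)
  have f21: "qpoch (b/(c*q^m)) q (Suc i) = D1*(c*s-b*t)/(c*s)"
    using hc s0 by (simp add: D1_def qpoch_Suc t_def s_def field_simps)
  have f22: "qpoch (c/(b*q^Suc i)) q m = (b*q*t-c)*D2/(b*q*t-c*s)"
  proof -
    have "qpoch (c/(b*q^Suc i)) q m * (1 - c/(b*q^Suc i)*q^m) = (b*q*t-c)/(b*q*t)*D2"
      using f10 by (simp add: qpoch_Suc)
    then have "qpoch (c/(b*q^Suc i)) q m * (b*q*t-c*s) = (b*q*t-c)*D2"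
      using hb hq t0 by (simp add: t_def s_def field_simps)
    then show ?thesis using n8 by (simp add: field_simps)
  qed
  have f23: "qpoch (b*c) q (Suc i + m) = B" by (simp add: B_def)
  have n5': "c*s - b*t \<noteq> 0" using n5 by (metis eq_iff_diff_eq_0)
  note nz = n5' hq hb hc t0 s0 E0 n1 n2 n3 n4 n5 n6 n7 n8 Pi0 Pm0 D10 D20 B0
  note fr = times_divide_eq_left times_divide_eq_right divide_divide_eq_left divide_divide_eq_right
  define G where "G = PQ*A1*A2*A3*A4/(E*Pi*Pm*D1*D2*B)"
  have g0: "CC q (Suc i) (Suc m) a b c = G * (q*(1-q*q*t*s)*(c-a*t)*(b-a*s)*(1-q*a*c*t*s)*(1-q*a*b*t*s) / ((1-q*t)*(1-q*s)*(c*q*s-b)*(b*q*t-c)*(1-b*c*q*t*s)))"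
    unfolding CC_def f01 f02 f03 f04 f05 f06 f07 f08 f09 f10 f11 G_def
    apply (simp only: fr)
    apply (subst frac_eq_eq)
      apply (intro no_zero_divisors nz)
     apply (intro no_zero_divisors nz)
    apply algebra
    done
  have g1: "CC q i (Suc m) a b c = G * ((b-a*s)*(1-a*b*t)*(c*q*s-b*t)/((1-q*s)*(c*q*s-b)*(b*t-c*s)))"
    unfolding CC_def f12 f03 f06 f13 f14 f15 f16 f17 G_def Pi_def[symmetric] A1_def[symmetric] A2_def[symmetric]
    apply (simp only: fr)
    apply (subst frac_eq_eq)
      apply (intro no_zero_divisors nz)
     apply (intro no_zero_divisors nz)
    apply algebra
    done
  have g2: "CC q (Suc i) m a b c = G * ((c-a*t)*(1-a*c*s)*(b*q*t-c*s)/((1-q*t)*(b*q*t-c)*(c*s-b*t)))"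
    unfolding CC_def f18 f02 f04 f19 f20 f21 f22 f23 G_def Pm_def[symmetric] A3_def[symmetric] A4_def[symmetric]
    apply (simp only: fr)
    apply (subst frac_eq_eq)
      apply (intro no_zero_divisors nz)
     apply (intro no_zero_divisors nz)
    apply algebra
    done
  have al1: "al (a*q^(Suc(i+m))) (b*q^i) (c*q^(Suc m)) = al (a*q*t*s) (b*t) (c*q*s)"
    by (simp add: t_def s_def power_add ac_simps)
  have al2: "al (a*q^(Suc(i+m))) (c*q^m) (b*q^(Suc i)) = al (a*q*t*s) (c*s) (b*q*t)"
    by (simp add: t_def s_def power_add ac_simps)
  show ?thesis unfolding g0 g1 g2 al1 al2 core[OF n1 n2 n3 n4 n5 n6 n7 n8, of a]
    by (simp add: algebra_simps)
qed

lemma bnd0: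
  fixes q a b c :: complex and m :: nat
  assumes hq: "q \<noteq> 0" and hb: "b \<noteq> 0" and hc: "c \<noteq> 0"
    and hQ: "\<And>j. 1 \<le> j \<Longrightarrow> j \<le> Suc m \<Longrightarrow> q^j \<noteq> 1"
    and hB: "\<And>A B. A < Suc m \<Longrightarrow> B < Suc m \<Longrightarrow> b*q^B \<noteq> c*q^A"
    and hC: "\<And>j. j < Suc m \<Longrightarrow> b*c*q^j \<noteq> 1"
  shows "CC q 0 (Suc m) a b c = al (a*q^m) (c*q^m) b * CC q 0 m a b c"
proof -
  define w where "w = q^m"
  have w0: "w \<noteq> 0" using hq by (simp add: w_def)
  have P1: "qpoch q q (Suc m) \<noteq> 0"
    by (rule qpoch_nz) (use hQ in \<open>auto simp flip: power_Suc\<close>)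
  have P0: "qpoch q q m \<noteq> 0"
    by (rule qpoch_nz) (use hQ in \<open>auto simp flip: power_Suc\<close>)
  have D0: "qpoch (c/b) q m \<noteq> 0"
  proof (rule qpoch_nz)
    fix j assume "j < m"
    then have "b*q^0 \<noteq> c*q^j" using hB[of j 0] by simp
    then show "c/b*q^j \<noteq> 1" using hb by (simp add: field_simps)
  qed
  have B0: "qpoch (b*c) q m \<noteq> 0" by (rule qpoch_nz) (use hC in auto)
  have n1: "b - c*w \<noteq> 0" using hB[of m 0] by (simp add: w_def)
  have n1': "c*w - b \<noteq> 0" using n1 by (metis eq_iff_diff_eq_0)
  have n2: "1 - b*c*w \<noteq> 0" using hC[of m] by (simp add: w_def)
  have n2': "1 - c*w*b \<noteq> 0" using n2 by (simp add: ac_simps)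
  note nz = one_neq_zero hq hb hc w0 P1 P0 D0 B0 n1 n1' n2 n2'
  note fr = times_divide_eq_left times_divide_eq_right divide_divide_eq_left divide_divide_eq_right
  have f1: "qpoch (a/b) q (Suc m) = qpoch (a/b) q m * (b - a*w)/b"
    using hb by (simp add: qpoch_Suc w_def field_simps)
  have f2: "qpoch (q^0*a*b) q (Suc m) = qpoch (a*b) q m * (1 - a*b*w)"
    by (simp add: qpoch_Suc w_def)
  have f3: "qpoch (c/(b*q^0)) q (Suc m) = qpoch (c/b) q m * (b - c*w)/b"
    using hb by (simp add: qpoch_Suc w_def field_simps)
  have f4: "qpoch (b*c) q (0 + Suc m) = qpoch (b*c) q m * (1 - b*c*w)"
    by (simp add: qpoch_Suc w_def)
  have f5: "qpoch q q (0 + Suc m) = qpoch q q (Suc m)" by simp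
  have f6: "qpoch q q (0 + m) = qpoch q q m" "qpoch (c/(b*q^0)) q m = qpoch (c/b) q m"
     "qpoch (q^0*a*b) q m = qpoch (a*b) q m" "qpoch (b*c) q (0 + m) = qpoch (b*c) q m" by simp_all
  have e0: "\<And>x. qpoch x q 0 = 1" "q^(0*m) = 1" "q^(0*Suc m) = 1" by (simp_all add: qpoch_def)
  have al1: "al (a*q^m) (c*q^m) b = al (a*w) (c*w) b" by (simp add: w_def)
  show ?thesis unfolding CC_def f1 f2 f3 f4 f5 f6 e0 al1 unfolding al_def
    apply (simp only: fr)
    apply (subst frac_eq_eq)
      apply (intro no_zero_divisors nz)
     apply (intro no_zero_divisors nz)
    apply algebra
    done
qed

lemma bndN:
  fixes q a b c :: complex and m :: nat
  assumes hq: "q \<noteq> 0" and hb: "b \<noteq> 0" and hc: "c \<noteq> 0"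
    and hQ: "\<And>j. 1 \<le> j \<Longrightarrow> j \<le> Suc m \<Longrightarrow> q^j \<noteq> 1"
    and hB: "\<And>A B. A < Suc m \<Longrightarrow> B < Suc m \<Longrightarrow> b*q^B \<noteq> c*q^A"
    and hC: "\<And>j. j < Suc m \<Longrightarrow> b*c*q^j \<noteq> 1"
  shows "CC q (Suc m) 0 a b c = al (a*q^m) (b*q^m) c * CC q m 0 a b c"
proof -
  define w where "w = q^m"
  have w0: "w \<noteq> 0" using hq by (simp add: w_def)
  have P1: "qpoch q q (Suc m) \<noteq> 0"
    by (rule qpoch_nz) (use hQ in \<open>auto simp flip: power_Suc\<close>)
  have P0: "qpoch q q m \<noteq> 0"
    by (rule qpoch_nz) (use hQ in \<open>auto simp flip: power_Suc\<close>)
  have D0: "qpoch (b/c) q m \<noteq> 0"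
  proof (rule qpoch_nz)
    fix j assume "j < m"
    then have "b*q^j \<noteq> c*q^0" using hB[of 0 j] by simp
    then show "b/c*q^j \<noteq> 1" using hc by (simp add: field_simps)
  qed
  have B0: "qpoch (b*c) q m \<noteq> 0" by (rule qpoch_nz) (use hC in auto)
  have n1: "c - b*w \<noteq> 0" using hB[of 0 m] by (auto simp add: w_def)
  have n1': "b*w - c \<noteq> 0" using n1 by (metis eq_iff_diff_eq_0)
  have n2: "1 - b*c*w \<noteq> 0" using hC[of m] by (simp add: w_def)
  have n2': "1 - b*w*c \<noteq> 0" using n2 by (simp add: ac_simps)
  note nz = one_neq_zero hq hb hc w0 P1 P0 D0 B0 n1 n1' n2 n2'
  note fr = times_divide_eq_left times_divide_eq_right divide_divide_eq_left divide_divide_eq_right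
  have f1: "qpoch (a/c) q (Suc m) = qpoch (a/c) q m * (c - a*w)/c"
    using hc by (simp add: qpoch_Suc w_def field_simps)
  have f2: "qpoch (q^0*a*c) q (Suc m) = qpoch (a*c) q m * (1 - a*c*w)"
    by (simp add: qpoch_Suc w_def)
  have f3: "qpoch (b/(c*q^0)) q (Suc m) = qpoch (b/c) q m * (c - b*w)/c"
    using hc by (simp add: qpoch_Suc w_def field_simps)
  have f4: "qpoch (b*c) q (Suc m + 0) = qpoch (b*c) q m * (1 - b*c*w)"
    by (simp add: qpoch_Suc w_def)
  have f5: "qpoch q q (Suc m + 0) = qpoch q q (Suc m)" by simp
  have f6: "qpoch q q (m + 0) = qpoch q q m" "qpoch (b/(c*q^0)) q m = qpoch (b/c) q m"
     "qpoch (q^0*a*c) q m = qpoch (a*c) q m" "qpoch (b*c) q (m + 0) = qpoch (b*c) q m" by simp_all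
  have e0: "\<And>x. qpoch x q 0 = 1" "q^(m*0) = 1" "q^(Suc m*0) = 1" by (simp_all add: qpoch_def)
  have al1: "al (a*q^m) (b*q^m) c = al (a*w) (b*w) c" by (simp add: w_def)
  show ?thesis unfolding CC_def f1 f2 f3 f4 f5 f6 e0 al1 unfolding al_def
    apply (simp only: fr)
    apply (subst frac_eq_eq)
      apply (intro no_zero_divisors nz)
     apply (intro no_zero_divisors nz)
    apply algebra
    done
qed

lemma coef_rec:
  fixes q a b c :: complex and n k :: nat
  assumes hq: "q \<noteq> 0" and hb: "b \<noteq> 0" and hc: "c \<noteq> 0"
    and hQ: "\<And>j. 1 \<le> j \<Longrightarrow> j \<le> Suc n \<Longrightarrow> q^j \<noteq> 1"
    and hB: "\<And>A B. A < Suc n \<Longrightarrow> B < Suc n \<Longrightarrow> b*q^B \<noteq> c*q^A"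
    and hC: "\<And>j. j < Suc n \<Longrightarrow> b*c*q^j \<noteq> 1"
    and hk: "k \<le> Suc n"
  shows "connC q (Suc n) k a b c = (if k = 0 then 0 else al (a*q^n) (b*q^(k-1)) (c*q^(n-(k-1))) * connC q n (k-1) a b c)
      + (if k = Suc n then 0 else al (a*q^n) (c*q^(n-k)) (b*q^k) * connC q n k a b c)"
proof (cases "k = 0")
  case True
  have "connC q (Suc n) 0 a b c = CC q 0 (Suc n) a b c" using connC_CC[OF hq, of 0 "Suc n"] by simp
  moreover have "connC q n 0 a b c = CC q 0 n a b c" using connC_CC[OF hq, of 0 n] by simp
  ultimately show ?thesis using True bnd0[OF hq hb hc hQ hB hC] by simp
next
  case False
  show ?thesis
  proof (cases "k = Suc n")
    case True
    have "connC q (Suc n) (Suc n) a b c = CC q (Suc n) 0 a b c" using connC_CC[OF hq, of "Suc n" 0] by simp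
    moreover have "connC q n n a b c = CC q n 0 a b c" using connC_CC[OF hq, of n 0] by simp
    ultimately show ?thesis using True bndN[OF hq hb hc hQ hB hC] by simp
  next
    case False2: False
    obtain i where ki: "k = Suc i" using False by (cases k) auto
    define m where "m = n - Suc i"
    have nm: "n = Suc (i + m)" using hk False2 ki unfolding m_def by linarith
    have c1: "connC q (Suc n) k a b c = CC q (Suc i) (Suc m) a b c"
      using connC_CC[OF hq, of "Suc i" "Suc m"] by (simp add: ki nm)
    have c2: "connC q n i a b c = CC q i (Suc m) a b c"
      using connC_CC[OF hq, of i "Suc m"] by (simp add: ki nm)
    have c3: "connC q n k a b c = CC q (Suc i) m a b c"
      using connC_CC[OF hq, of "Suc i" m] by (simp add: ki nm)
    have e1: "n - (k-1) = Suc m" "n - k = m" "k - 1 = i" using ki nm by auto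
    have hQ': "q^j \<noteq> 1" if "1 \<le> j" "j \<le> Suc (Suc (i+m))" for j using hQ[of j] that nm by simp
    have hB': "b*q^B' \<noteq> c*q^A'" if "A' < Suc (Suc (i+m))" "B' < Suc (Suc (i+m))" for A' B' using hB[of A' B'] that nm by simp
    have hC': "b*c*q^j \<noteq> 1" if "j < Suc (Suc (i+m))" for j using hC[of j] that nm by simp
    have I: "CC q (Suc i) (Suc m) a b c = al (a*q^(Suc(i+m))) (b*q^i) (c*q^(Suc m)) * CC q i (Suc m) a b c
     + al (a*q^(Suc(i+m))) (c*q^m) (b*q^(Suc i)) * CC q (Suc i) m a b c"
      by (rule interior[OF hq hb hc hQ' hB' hC'])
    show ?thesis using False False2 unfolding e1 c1 c2 c3 I by (simp add: ki nm)
  qed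
qed

lemma main_ind:
  fixes q a b c x :: complex and N :: nat
  assumes hq: "q \<noteq> 0" and hb: "b \<noteq> 0" and hc: "c \<noteq> 0"
  shows "(\<And>j. 1 \<le> j \<Longrightarrow> j \<le> N \<Longrightarrow> q^j \<noteq> 1) \<Longrightarrow>
    (\<And>A B. A < N \<Longrightarrow> B < N \<Longrightarrow> b*q^B \<noteq> c*q^A) \<Longrightarrow>
    (\<And>j. j < N \<Longrightarrow> b*c*q^j \<noteq> 1) \<Longrightarrow>
    hpoly q N x a = (\<Sum>k\<le>N. connC q N k a b c * hpoly q k x b * hpoly q (N - k) x c)"
proof (induction N)
  case 0
  then show ?case by (simp add: hpoly_def connC_def qbinom_def qpoch_def)
next
  case (Suc n)
  have IH: "hpoly q n x a = (\<Sum>k\<le>n. connC q n k a b c * hpoly q k x b * hpoly q (n - k) x c)"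
    by (rule Suc.IH) (use Suc.prems in auto)
  have st: "hpoly q (Suc n) x a = (\<Sum>k\<le>Suc n. ((if k = 0 then 0 else al (a*q^n) (b*q^(k-1)) (c*q^(n-(k-1))) * connC q n (k-1) a b c)
      + (if k = Suc n then 0 else al (a*q^n) (c*q^(n-k)) (b*q^k) * connC q n k a b c)) * hpoly q k x b * hpoly q (Suc n - k) x c)"
  proof (rule expand_step[OF IH])
    fix k assume "k \<le> n"
    have "b*q^k \<noteq> c*q^(n-k)" using Suc.prems(2)[of "n-k" k] \<open>k \<le> n\<close> by simp
    moreover have "b*q^k*(c*q^(n-k)) \<noteq> 1"
    proof -
      have p: "q^k*q^(n-k) = q^n" using \<open>k \<le> n\<close> by (simp flip: power_add)
      have "b*q^k*(c*q^(n-k)) = b*c*(q^k*q^(n-k))" by (simp add: ac_simps)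
      also have "\<dots> = b*c*q^n" unfolding p ..
      finally have "b*q^k*(c*q^(n-k)) = b*c*q^n" .
      then show ?thesis using Suc.prems(3)[of n] by (metis lessI)
    qed
    ultimately show "b*q^k \<noteq> c*q^(n-k) \<and> b*q^k*(c*q^(n-k)) \<noteq> 1" by blast
  qed
  show ?case unfolding st
  proof (rule sum.cong[OF refl])
    fix k assume "k \<in> {..Suc n}"
    then have "k \<le> Suc n" by simp
    note cr = coef_rec[OF hq hb hc Suc.prems(1) Suc.prems(2) Suc.prems(3) this, of a]
    show "((if k = 0 then 0 else al (a*q^n) (b*q^(k-1)) (c*q^(n-(k-1))) * connC q n (k-1) a b c)
      + (if k = Suc n then 0 else al (a*q^n) (c*q^(n-k)) (b*q^k) * connC q n k a b c)) * hpoly q k x b * hpoly q (Suc n - k) x c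
      = connC q (Suc n) k a b c * hpoly q k x b * hpoly q (Suc n - k) x c"
      using cr by simp
  qed
qed

theorem mainTheorem2:
  fixes N :: nat and q a b c :: complex
  assumes "q \<noteq> 0"
    and "\<forall>j\<in>{1..N}. q ^ j \<noteq> 1"
    and "b \<noteq> 0" and "c \<noteq> 0"
    and "\<forall>j::int. 1 - int N \<le> j \<and> j \<le> int N - 1 \<longrightarrow> b / c \<noteq> q powi j"
    and "\<forall>j::nat. j < N \<longrightarrow> b * c \<noteq> q powi (- int j)"
  shows "\<forall>x::complex. hpoly q N x a =
           (\<Sum>k\<le>N. connC q N k a b c * hpoly q k x b * hpoly q (N - k) x c)"
proof
  fix x :: complex
  have hQ: "q^j \<noteq> 1" if "1 \<le> j" "j \<le> N" for j using assms(2) that by auto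
  have hB: "b*q^B \<noteq> c*q^A" if "A < N" "B < N" for A B
  proof
    assume eq: "b*q^B = c*q^A"
    have "b / c = q^A / q^B" using eq assms(1,4) by (simp add: field_simps)
    also have "\<dots> = q powi (int A - int B)" using assms(1) by (simp add: power_int_diff)
    finally have "b / c = q powi (int A - int B)" .
    moreover have "1 - int N \<le> int A - int B \<and> int A - int B \<le> int N - 1" using that by linarith
    ultimately show False using assms(5) by blast
  qed
  have hC: "b*c*q^j \<noteq> 1" if "j < N" for j
  proof
    assume eq: "b*c*q^j = 1"
    have "b * c = inverse (q^j)" using eq assms(1) by (simp add: field_simps)
    then have "b * c = q powi (- int j)" by (simp add: power_int_minus)
    then show False using assms(6) that by blast
  qed
  show "hpoly q N x a = (\<Sum>k\<le>N. connC q N k a b c * hpoly q k x b * hpoly q (N - k) x c)"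
    by (rule main_ind[OF assms(1,3,4) hQ hB hC])
qed

end
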